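(* Let $g \in L^2(\mathbb{R})$ be a real-valued function with $\|g\|_2 = 1$. Let $\alpha = V_g g(0,1)$ and $$A = \begin{bmatrix} 1 & \alpha \\ \overline{\alpha} & 1 \end{bmatrix}, \qquad u(a,b) = \begin{bmatrix} V_g g(a,b) \\ V_g g(a, b-1)\end{bmatrix}, \qquad F(a,b) = \langle A^{-1} u(a,b), u(a,b)\rangle .$$ Then $F(a,b) = F(a, 1-b)$ for all $(a,b) \in \mathbb{Z}\times\mathbb{R}$ with $b \neq 1/2$, and $F(-a, 1/2) = F(a, 1/2)$ for all $a \in \mathbb{Z}$.
   Context: The short-time Fourier transform of $f \in L^2(\mathbb{R})$ with window $g\in L^2(\mathbb{R})$ is $V_g f(x,y) = \int_{\mathbb{R}} f(t)\overline{g(t-x)} e^{-2\pi i y t}\,dt$. The inner product on $\mathbb{C}^2$ is $\langle v, w\rangle = \sum_j v_j \overline{w_j}$. The matrix $A$ is the Gramian of $\{g, e^{2\pi i\cdot}g\}$, which are linearly independent, so $|\alpha|<1$ and $A$ is invertible. *)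

theory Defs
  imports "HOL-Analysis.Analysis"
begin

definition stft :: "(real \<Rightarrow> complex) \<Rightarrow> (real \<Rightarrow> complex) \<Rightarrow> real \<Rightarrow> real \<Rightarrow> complex" where
  "stft g f x y = (LINT t|lborel. f t * cnj (g (t - x)) * exp (- (2 * pi * \<i> * y * t)))"

definition cinner2 :: "complex^2 \<Rightarrow> complex^2 \<Rightarrow> complex" where
  "cinner2 v w = (\<Sum>j\<in>UNIV. v $ j * cnj (w $ j))"

definition alpha_g :: "(real \<Rightarrow> real) \<Rightarrow> complex" where
  "alpha_g g = stft (\<lambda>t. complex_of_real (g t)) (\<lambda>t. complex_of_real (g t)) 0 1"

definition A_g :: "(real \<Rightarrow> real) \<Rightarrow> complex^2^2" where
  "A_g g = vector [vector [1, alpha_g g], vector [cnj (alpha_g g), 1]]"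

definition u_g :: "(real \<Rightarrow> real) \<Rightarrow> real \<Rightarrow> real \<Rightarrow> complex^2" where
  "u_g g a b = vector [stft (\<lambda>t. complex_of_real (g t)) (\<lambda>t. complex_of_real (g t)) a b,
                       stft (\<lambda>t. complex_of_real (g t)) (\<lambda>t. complex_of_real (g t)) a (b - 1)]"

definition F_g :: "(real \<Rightarrow> real) \<Rightarrow> real \<Rightarrow> real \<Rightarrow> complex" where
  "F_g g a b = cinner2 (matrix_inv (A_g g) *v u_g g a b) (u_g g a b)"

end

theory Submission
  imports Defs
begin


lemma vec2_eq: "(v::'a^2) = w \<longleftrightarrow> v$1 = w$1 \<and> v$2 = w$2"
  by (metis exhaust_2 vec_eq_iff)

lemma inv2:
  fixes a :: complex
  defines "d \<equiv> 1 - a * cnj a"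
  assumes d: "d \<noteq> 0"
  shows "matrix_inv (vector [vector [1, a], vector [cnj a, 1]] :: complex^2^2)
       = vector [vector [1/d, -a/d], vector [-cnj a/d, 1/d]]"
proof -
  let ?A = "vector [vector [1, a], vector [cnj a, 1]] :: complex^2^2"
  let ?B = "vector [vector [1/d, -a/d], vector [-cnj a/d, 1/d]] :: complex^2^2"
  have h: "1 + a * (a * (cnj a * cnj a)) \<noteq> a * (cnj a * 2)"
  proof
    assume "1 + a * (a * (cnj a * cnj a)) = a * (cnj a * 2)"
    then have "d * d = 0" unfolding d_def by (simp add: algebra_simps)
    then show False using d by simp
  qed
  have AB: "?A ** ?B = mat 1" and BA: "?B ** ?A = mat 1"
    using d h by (auto simp: vec2_eq matrix_matrix_mult_def sum_2 mat_def d_def field_simps)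
  have ex: "\<exists>A'. ?A ** A' = mat 1 \<and> A' ** ?A = mat 1" using AB BA by blast
  have I: "?A ** matrix_inv ?A = mat 1 \<and> matrix_inv ?A ** ?A = mat 1"
    unfolding matrix_inv_def by (rule someI_ex[OF ex])
  have "matrix_inv ?A = matrix_inv ?A ** (?A ** ?B)" using AB by (simp add: matrix_mul_rid)
  also have "\<dots> = (matrix_inv ?A ** ?A) ** ?B" by (simp add: matrix_mul_assoc)
  also have "\<dots> = ?B" using I by (simp add: matrix_mul_lid)
  finally show ?thesis .
qed

lemma cinner_sym:
  fixes M :: "complex^2^2"
  assumes "M$1$1 = M$2$2"
  shows "cinner2 (M *v vector [cnj y, cnj x]) (vector [cnj y, cnj x]) = cinner2 (M *v vector [x, y]) (vector [x, y])"
  using assms by (simp add: cinner2_def matrix_vector_mult_def sum_2 algebra_simps)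

lemma cinner_scale:
  fixes M :: "complex^2^2"
  shows "cinner2 (M *v (e *s u)) (e *s u) = (e * cnj e) * cinner2 (M *v u) u"
  by (simp add: cinner2_def matrix_vector_mult_def sum_2 algebra_simps)



lemma stft_cnj:
  fixes g :: "real \<Rightarrow> real"
  shows "cnj (stft (\<lambda>t. complex_of_real (g t)) (\<lambda>t. complex_of_real (g t)) a b)
       = stft (\<lambda>t. complex_of_real (g t)) (\<lambda>t. complex_of_real (g t)) a (-b)"
proof -
  let ?f = "\<lambda>t. complex_of_real (g t) * cnj (complex_of_real (g (t - a))) * exp (- (2 * pi * \<i> * b * t))"
  have "(LINT t|lborel. cnj (?f t)) = cnj (LINT t|lborel. ?f t)" by (rule Bochner_Integration.integral_cnj)
  moreover have "(LINT t|lborel. cnj (?f t)) = (LINT t|lborel. complex_of_real (g t) * cnj (complex_of_real (g (t - a))) * exp (- (2 * pi * \<i> * (-b) * t)))"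
    by (rule Bochner_Integration.integral_cong) (auto simp: exp_cnj)
  ultimately show ?thesis unfolding stft_def by simp
qed

lemma stft_shift:
  fixes g :: "real \<Rightarrow> real"
  shows "stft (\<lambda>t. complex_of_real (g t)) (\<lambda>t. complex_of_real (g t)) (-a) b
       = exp (2 * pi * \<i> * b * a) * stft (\<lambda>t. complex_of_real (g t)) (\<lambda>t. complex_of_real (g t)) a b"
proof -
  let ?G = "\<lambda>t. complex_of_real (g t)"
  have "stft ?G ?G (-a) b = (LINT x|lborel. ?G (-a + x) * cnj (?G (-a + x - - a)) * exp (- (2 * pi * \<i> * b * (-a + x))))"
    unfolding stft_def using lborel_integral_real_affine[of 1 "\<lambda>t. ?G t * cnj (?G (t - - a)) * exp (- (2 * pi * \<i> * b * t))" "-a"]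
    by simp
  also have "\<dots> = (LINT x|lborel. exp (2 * pi * \<i> * b * a) * (?G x * cnj (?G (x - a)) * exp (- (2 * pi * \<i> * b * x))))"
  proof (rule Bochner_Integration.integral_cong)
    fix x
    have "exp (- (2 * pi * \<i> * b * (-a + x))) = exp (2 * pi * \<i> * b * a) * exp (- (2 * pi * \<i> * b * x))"
      by (simp add: exp_add[symmetric] algebra_simps)
    then show "?G (-a + x) * cnj (?G (-a + x - - a)) * exp (- (2 * pi * \<i> * b * (-a + x))) =
        exp (2 * pi * \<i> * b * a) * (?G x * cnj (?G (x - a)) * exp (- (2 * pi * \<i> * b * x)))"
      by (simp add: algebra_simps)
  qed simp
  also have "\<dots> = exp (2 * pi * \<i> * b * a) * stft ?G ?G a b"
    unfolding stft_def by simp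
  finally show ?thesis .
qed



lemma alpha_ne:
  fixes g :: "real \<Rightarrow> real"
  assumes meas: "g \<in> borel_measurable lborel"
    and sq: "integrable lborel (\<lambda>t. (g t)\<^sup>2)"
    and norm1: "(LINT t|lborel. (g t)\<^sup>2) = 1"
  shows "alpha_g g * cnj (alpha_g g) \<noteq> 1"
proof
  assume H: "alpha_g g * cnj (alpha_g g) = 1"
  define E where "E t = exp (- (2 * pi * \<i> * complex_of_real t))" for t
  define w where "w = cnj (alpha_g g)"
  have normE: "norm (E t) = 1" for t unfolding E_def by (simp add: norm_exp_eq_Re)
  have Emeas: "E \<in> borel_measurable lborel" unfolding E_def
    by measurable
  have alpha: "alpha_g g = (LINT t|lborel. complex_of_real ((g t)\<^sup>2) * E t)"
    unfolding alpha_g_def stft_def E_def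
    by (rule Bochner_Integration.integral_cong) (auto simp: power2_eq_square)
  have int1: "integrable lborel (\<lambda>t. complex_of_real ((g t)\<^sup>2) * E t)"
  proof (rule Bochner_Integration.integrable_bound[where f="\<lambda>t. complex_of_real ((g t)\<^sup>2)"])
    show "integrable lborel (\<lambda>t. complex_of_real ((g t)\<^sup>2))"
      using sq complex_of_real_integrable_eq[of lborel "\<lambda>t. (g t)\<^sup>2"] by simp
    show "(\<lambda>t. complex_of_real ((g t)\<^sup>2) * E t) \<in> borel_measurable lborel"
      using meas Emeas by measurable
    show "AE t in lborel. norm (complex_of_real ((g t)\<^sup>2) * E t) \<le> norm (complex_of_real ((g t)\<^sup>2))"
      by (simp add: norm_mult normE)
  qed
  have nw: "norm w = 1"
  proof -
    have "complex_of_real ((norm (alpha_g g))\<^sup>2) = 1" by (metis H complex_norm_square)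
    then have "(norm (alpha_g g))\<^sup>2 = 1" by (metis of_real_eq_1_iff of_real_power)
    then show ?thesis unfolding w_def by (smt (verit) power2_eq_1_iff norm_ge_zero complex_mod_cnj)
  qed
  have "Re (w * alpha_g g) = 1" using H unfolding w_def by (simp add: mult.commute)
  also have "w * alpha_g g = (LINT t|lborel. w * (complex_of_real ((g t)\<^sup>2) * E t))"
    unfolding alpha by simp
  also have "Re \<dots> = (LINT t|lborel. Re (w * (complex_of_real ((g t)\<^sup>2) * E t)))"
    using int1 by (simp only: integral_Re integrable_mult_right)
  also have "\<dots> = (LINT t|lborel. (g t)\<^sup>2 * Re (w * E t))"
    by (rule Bochner_Integration.integral_cong) (auto simp: algebra_simps)
  finally have I1: "(LINT t|lborel. (g t)\<^sup>2 * Re (w * E t)) = 1" .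
  have int2: "integrable lborel (\<lambda>t. (g t)\<^sup>2 * Re (w * E t))"
  proof -
    have "integrable lborel (\<lambda>t. Re (w * (complex_of_real ((g t)\<^sup>2) * E t)))"
      using int1 by (intro integrable_Re integrable_mult_right)
    moreover have "(\<lambda>t. Re (w * (complex_of_real ((g t)\<^sup>2) * E t))) = (\<lambda>t. (g t)\<^sup>2 * Re (w * E t))"
      by (auto simp: algebra_simps)
    ultimately show ?thesis by simp
  qed
  define f where "f t = (g t)\<^sup>2 - (g t)\<^sup>2 * Re (w * E t)" for t
  have intf: "integrable lborel f" unfolding f_def using sq int2 by simp
  have "integral\<^sup>L lborel f = 0" unfolding f_def using sq int2 I1 norm1 by simp
  moreover have fnn: "0 \<le> f t" for t
  proof -
    have "Re (w * E t) \<le> norm (w * E t)" by (rule complex_Re_le_cmod)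
    also have "\<dots> = 1" by (simp add: norm_mult nw normE)
    finally have "0 \<le> 1 - Re (w * E t)" by simp
    then have "0 \<le> (g t)\<^sup>2 * (1 - Re (w * E t))" by simp
    then show ?thesis unfolding f_def by (simp add: algebra_simps)
  qed
  ultimately have AE0: "AE t in lborel. f t = 0"
    using integral_nonneg_eq_0_iff_AE[OF intf] by simp
  define S where "S = {t. w * E t = 1}"
  have "countable S"
  proof (cases "S = {}")
    case False
    then obtain s where s: "s \<in> S" by auto
    have "S \<subseteq> range (\<lambda>n::int. s - of_int n)"
    proof
      fix t assume t: "t \<in> S"
      have "w \<noteq> 0" using nw by auto
      moreover have "w * E t = w * E s" using s t unfolding S_def by simp
      ultimately have "E t = E s" by simp
      then obtain n :: int where n: "- (2 * pi * \<i> * complex_of_real t) = - (2 * pi * \<i> * complex_of_real s) + (of_int (2 * n) * pi) * \<i>"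
        unfolding E_def exp_eq by blast
      then have "Im (- (2 * pi * \<i> * complex_of_real t)) = Im (- (2 * pi * \<i> * complex_of_real s) + (of_int (2 * n) * pi) * \<i>)"
        by simp
      then have "- (2 * pi * t) = - (2 * pi * s) + 2 * of_int n * pi" by simp
      then have "pi * (2 * (s - t - of_int n)) = 0" by (simp add: algebra_simps)
      then have "t = s - of_int n" by simp
      then show "t \<in> range (\<lambda>n::int. s - of_int n)" by blast
    qed
    then show ?thesis by (rule countable_subset) simp
  qed simp
  then have AES: "AE t in lborel. t \<notin> S"
    by (intro AE_not_in countable_imp_null_set_lborel)
  have "AE t in lborel. (g t)\<^sup>2 = 0"
    using AE0 AES
  proof eventually_elim
    case (elim t)
    show ?case
    proof (rule ccontr)
      assume ne: "(g t)\<^sup>2 \<noteq> 0"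
      from elim(1) have "(g t)\<^sup>2 * (1 - Re (w * E t)) = 0" unfolding f_def by (simp add: algebra_simps)
      then have re: "Re (w * E t) = 1" using ne by simp
      have "(norm (w * E t))\<^sup>2 = 1" by (simp add: norm_mult nw normE)
      then have "(Re (w * E t))\<^sup>2 + (Im (w * E t))\<^sup>2 = 1" by (simp add: cmod_power2)
      then have "Im (w * E t) = 0" using re by simp
      then have "w * E t = 1" using re by (simp add: complex_eq_iff)
      then show False using elim(2) unfolding S_def by simp
    qed
  qed
  then have "(LINT t|lborel. (g t)\<^sup>2) = 0"
    by (rule integral_eq_zero_AE)
  then show False using norm1 by simp
qed


theorem lemma2p6:
  fixes g :: "real \<Rightarrow> real"
  assumes meas: "g \<in> borel_measurable lborel"
    and sq: "integrable lborel (\<lambda>t. (g t)\<^sup>2)"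
    and norm1: "(LINT t|lborel. (g t)\<^sup>2) = 1"
  shows "(\<forall>a::int. \<forall>b::real. b \<noteq> 1/2 \<longrightarrow> F_g g (of_int a) b = F_g g (of_int a) (1 - b))
       \<and> (\<forall>a::int. F_g g (of_int (- a)) (1/2) = F_g g (of_int a) (1/2))"
proof -
  let ?G = "\<lambda>t. complex_of_real (g t)"
  let ?V = "stft ?G ?G"
  let ?M = "matrix_inv (A_g g)"
  have d: "1 - alpha_g g * cnj (alpha_g g) \<noteq> 0" using alpha_ne[OF meas sq norm1] by simp
  have M: "?M = vector [vector [1/(1 - alpha_g g * cnj (alpha_g g)), - alpha_g g/(1 - alpha_g g * cnj (alpha_g g))],
        vector [- cnj (alpha_g g)/(1 - alpha_g g * cnj (alpha_g g)), 1/(1 - alpha_g g * cnj (alpha_g g))]]"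
    unfolding A_g_def by (rule inv2[OF d])
  have M11: "?M$1$1 = ?M$2$2" unfolding M by simp
  have P1: "F_g g x b = F_g g x (1 - b)" for x b
  proof -
    have u: "u_g g x (1 - b) = vector [cnj (?V x (b - 1)), cnj (?V x b)]"
      unfolding u_g_def stft_cnj by simp
    show ?thesis unfolding F_g_def u unfolding u_g_def by (rule cinner_sym[OF M11, symmetric])
  qed
  have P2: "F_g g (of_int (- a)) (1/2) = F_g g (of_int a) (1/2)" for a :: int
  proof -
    define e where "e = exp (2 * pi * \<i> * complex_of_real (1/2) * complex_of_real (real_of_int a))"
    have e2: "exp (2 * pi * \<i> * complex_of_real (1/2 - 1) * complex_of_real (real_of_int a)) = e"
    proof -
      have "exp (2 * pi * \<i> * complex_of_real (1/2) * complex_of_real (real_of_int a)) = exp (2 * pi * \<i> * complex_of_real (1/2 - 1) * complex_of_real (real_of_int a)) * exp ((2 * of_int a * pi) * \<i>)"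
        unfolding exp_add[symmetric] by (rule arg_cong[where f=exp]) (simp add: algebra_simps)
      also have "exp ((2 * of_int a * pi) * \<i>) = 1" by (rule exp_integer_2pi) simp
      finally show ?thesis unfolding e_def by (metis mult_1_right)
    qed
    have ee: "e * cnj e = 1" unfolding e_def by (simp add: exp_cnj exp_add[symmetric])
    have u: "u_g g (of_int (- a)) (1/2) = e *s u_g g (of_int a) (1/2)"
    proof -
      have s1: "?V (- of_int a) (1/2) = e * ?V (of_int a) (1/2)"
        unfolding e_def by (rule stft_shift)
      have s2: "?V (- of_int a) (1/2 - 1) = e * ?V (of_int a) (1/2 - 1)"
        unfolding e2[symmetric] by (rule stft_shift)
      have "u_g g (of_int (- a)) (1/2) = vector [e * ?V (of_int a) (1/2), e * ?V (of_int a) (1/2 - 1)]"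
        unfolding u_g_def of_int_minus s1 s2 by (rule refl)
      also have "\<dots> = e *s u_g g (of_int a) (1/2)"
        unfolding u_g_def by (simp add: vec2_eq)
      finally show ?thesis .
    qed
    show ?thesis unfolding F_g_def u cinner_scale ee by simp
  qed
  show ?thesis using P1 P2 by blast
qed

end
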